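(* For every integer $t\ge0$: $m_2^{(2)}(4,7t+4)=31t+16$, $m_2^{(2)}(4,7t+5)=31t+17$, $m_2^{(2)}(4,7t+6)=31t+24$, $m_2^{(2)}(4,7t+7)=31t+31$, $m_2^{(2)}(4,7t+8)=31t+32$, $m_2^{(2)}(4,7t+9)=31t+33$, $m_2^{(2)}(4,7t+10)=31t+40$. Moreover, $m_2^{(2)}(4,3)=6$.
   Context: For a prime power $q$ and $N\ge1$, a multiset of points in $\mathrm{PG}(N,q)$ is a map $\mathcal{K}$ from the points to $\mathbb{Z}_{\ge0}$, with $\mathcal{K}(S)=\sum_{P\in S}\mathcal{K}(P)$; its cardinality is $\mathcal{K}(\mathrm{PG}(N,q))$. Dimensions are projective (planes have dimension 2). For $0\le r\le N-1$ and a positive integer $w$, $m_q^{(r)}(N,w)$ is the maximum cardinality of a multiset of points in $\mathrm{PG}(N,q)$ such that every $r$-dimensional subspace has multiplicity at most $w$. *)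

theory Defs
  imports Main
begin

text \<open>The projective geometry PG(N,2) over the field GF(2) = bool (addition = xor).
  Vectors of GF(2)^(N+1) are represented as functions nat \<Rightarrow> bool vanishing
  outside the coordinates 0..N.  Over GF(2) the only nonzero scalar is 1, so the
  points of PG(N,2) are exactly the nonzero vectors.\<close>

type_synonym vec2 = "nat \<Rightarrow> bool"

definition vzero :: vec2 where "vzero = (\<lambda>_. False)"

definition vadd :: "vec2 \<Rightarrow> vec2 \<Rightarrow> vec2" where
  "vadd u v = (\<lambda>i. u i \<noteq> v i)"

definition vecs :: "nat \<Rightarrow> vec2 set" where
  "vecs N = {v. \<forall>i. N < i \<longrightarrow> \<not> v i}"

definition pg_points :: "nat \<Rightarrow> vec2 set" where
  "pg_points N = vecs N - {vzero}"

text \<open>Linear subspaces of GF(2)^(N+1): contain 0 and are closed under addition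
  (closure under scalar multiplication is automatic over GF(2)).  A linear subspace
  of vector dimension r+1 has exactly 2^(r+1) elements.  The projective subspace of
  (projective) dimension r is the set of its nonzero vectors.\<close>

definition lin_subspace :: "nat \<Rightarrow> vec2 set \<Rightarrow> bool" where
  "lin_subspace N U \<longleftrightarrow> U \<subseteq> vecs N \<and> vzero \<in> U \<and> (\<forall>u\<in>U. \<forall>v\<in>U. vadd u v \<in> U)"

definition pg_subspaces :: "nat \<Rightarrow> nat \<Rightarrow> vec2 set set" where
  "pg_subspaces N r = {U - {vzero} | U. lin_subspace N U \<and> card U = 2 ^ (r + 1)}"

definition mult_set :: "(vec2 \<Rightarrow> nat) \<Rightarrow> vec2 set \<Rightarrow> nat" where
  "mult_set K S = (\<Sum>P\<in>S. K P)"

definition m2 :: "nat \<Rightarrow> nat \<Rightarrow> nat \<Rightarrow> nat" where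
  "m2 r N w = Max {mult_set K (pg_points N) | K.
      \<forall>S\<in>pg_subspaces N r. mult_set K S \<le> w}"

end

theory Submission
  imports Defs
begin

lemma vadd_comm: "vadd u v = vadd v u"
  unfolding vadd_def by auto
lemma vadd_assoc: "vadd (vadd u v) w = vadd u (vadd v w)"
  unfolding vadd_def by auto
lemma vadd_left_comm: "vadd u (vadd v w) = vadd v (vadd u w)"
  unfolding vadd_def by auto
lemma vadd_self[simp]: "vadd u u = vzero"
  unfolding vadd_def vzero_def by auto
lemma vadd_zero_left[simp]: "vadd vzero u = u"
  unfolding vadd_def vzero_def by auto
lemma vadd_zero_right[simp]: "vadd u vzero = u"
  unfolding vadd_def vzero_def by auto
lemma vadd_cancel_left[simp]: "vadd u (vadd u v) = v"
  unfolding vadd_def by auto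
lemma vadd_cancel_right[simp]: "vadd (vadd v u) u = v"
  unfolding vadd_def by auto
lemma vadd_eq_iff: "vadd u v = w \<longleftrightarrow> v = vadd u w"
  unfolding vadd_def by (auto simp: fun_eq_iff)
lemma vadd_inj[simp]: "vadd u v = vadd u w \<longleftrightarrow> v = w"
  unfolding vadd_def by (auto simp: fun_eq_iff)
lemma vadd_eq_zero[simp]: "vadd u v = vzero \<longleftrightarrow> u = v"
  unfolding vadd_def vzero_def by (auto simp: fun_eq_iff)
lemma vadd_eq_left[simp]: "vadd u v = u \<longleftrightarrow> v = vzero"
  unfolding vadd_def vzero_def by (auto simp: fun_eq_iff)
lemma vadd_eq_right[simp]: "vadd u v = v \<longleftrightarrow> u = vzero"
  unfolding vadd_def vzero_def by (auto simp: fun_eq_iff)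
lemma vadd_apply: "vadd u v i = (u i \<noteq> v i)"
  unfolding vadd_def by simp
lemma vzero_apply[simp]: "\<not> vzero i"
  unfolding vzero_def by simp

lemma vecs_add: "u \<in> vecs N \<Longrightarrow> v \<in> vecs N \<Longrightarrow> vadd u v \<in> vecs N"
  unfolding vecs_def vadd_def by auto
lemma vzero_vecs[simp]: "vzero \<in> vecs N"
  unfolding vecs_def vzero_def by auto

lemma bij_vecs: "bij_betw (\<lambda>v. {i. v i}) (vecs N) (Pow {0..N})"
proof (rule bij_betw_byWitness[where f'="\<lambda>S i. i \<in> S"])
  show "(\<lambda>v. {i. v i}) ` vecs N \<subseteq> Pow {0..N}" unfolding vecs_def by (auto simp: not_less)
  show "(\<lambda>S i. i \<in> S) ` Pow {0..N} \<subseteq> vecs N" unfolding vecs_def by auto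
qed auto

lemma finite_vecs[simp]: "finite (vecs N)"
  using bij_betw_finite[OF bij_vecs] by simp

lemma card_vecs: "card (vecs N) = 2 ^ Suc N"
  using bij_betw_same_card[OF bij_vecs[of N]] by (simp add: card_Pow)

lemma lin_finite: "lin_subspace N U \<Longrightarrow> finite U"
  unfolding lin_subspace_def by (metis finite_subset finite_vecs)

lemma lin_vecs: "lin_subspace N (vecs N)"
  unfolding lin_subspace_def using vecs_add vzero_vecs by blast

lemma lin_add: "lin_subspace N U \<Longrightarrow> u \<in> U \<Longrightarrow> v \<in> U \<Longrightarrow> vadd u v \<in> U"
  unfolding lin_subspace_def by blast
lemma lin_zero: "lin_subspace N U \<Longrightarrow> vzero \<in> U"
  unfolding lin_subspace_def by blast
lemma lin_sub: "lin_subspace N U \<Longrightarrow> U \<subseteq> vecs N"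
  unfolding lin_subspace_def by blast

lemma half:
  assumes U: "lin_subspace N U" and u: "u \<in> U" "u i"
  shows "card {v\<in>U. v i} = card {v\<in>U. \<not> v i}"
proof -
  have "bij_betw (vadd u) {v\<in>U. \<not> v i} {v\<in>U. v i}"
  proof (rule bij_betw_byWitness[where f'="vadd u"])
    show "vadd u ` {v \<in> U. \<not> v i} \<subseteq> {v \<in> U. v i}"
      using lin_add[OF U u(1)] u(2) by (auto simp: vadd_apply)
    show "vadd u ` {v \<in> U. v i} \<subseteq> {v \<in> U. \<not> v i}"
      using lin_add[OF U u(1)] u(2) by (auto simp: vadd_apply)
  qed simp_all
  from bij_betw_same_card[OF this] show ?thesis by (rule sym)
qed

lemma card_split: "finite U \<Longrightarrow> card U = card {v\<in>U. v i} + card {v\<in>U. \<not> v i}"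
proof -
  assume f: "finite U"
  have "U = {v\<in>U. v i} \<union> {v\<in>U. \<not> v i}" by auto
  then have "card U = card ({v\<in>U. v i} \<union> {v\<in>U. \<not> v i})" by simp
  also have "\<dots> = card {v\<in>U. v i} + card {v\<in>U. \<not> v i}"
    by (rule card_Un_disjoint) (use f in auto)
  finally show ?thesis .
qed

lemma ker_lin: "lin_subspace N U \<Longrightarrow> lin_subspace N {v\<in>U. \<not> v i}"
  using lin_add[of N U] lin_zero[of N U] lin_sub[of N U] unfolding lin_subspace_def[of N "{v\<in>U. \<not> v i}"]
  by (auto simp: vadd_apply)

lemma ker_big: assumes U: "lin_subspace N U" shows "card U \<le> 2 * card {v\<in>U. \<not> v i}"
proof (cases "\<exists>u\<in>U. u i")
  case True
  then obtain u where "u \<in> U" "u i" by blast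
  with half[OF U this] card_split[OF lin_finite[OF U], of i] show ?thesis by simp
next
  case False
  then have "{v\<in>U. \<not> v i} = U" by auto
  then show ?thesis by simp
qed

lemma coord_small: assumes U: "lin_subspace N U" shows "2 * card {v\<in>U. v i} \<le> card U"
proof (cases "\<exists>u\<in>U. u i")
  case True
  then obtain u where "u \<in> U" "u i" by blast
  with half[OF U this] card_split[OF lin_finite[OF U], of i] show ?thesis by simp
next
  case False
  then have "{v\<in>U. v i} = {}" by auto
  then show ?thesis by (simp only:) simp
qed

lemma translate_lin:
  fixes K :: "vec2 \<Rightarrow> nat"
  assumes A: "lin_subspace N A" and B: "lin_subspace N B" and AB: "A \<subseteq> B" and x: "x \<in> B" "x \<notin> A"
  shows "lin_subspace N (A \<union> vadd x ` A)" "A \<subseteq> A \<union> vadd x ` A" "A \<union> vadd x ` A \<subseteq> B"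
    "card (A \<union> vadd x ` A) = 2 * card A"
    "mult_set K ((A \<union> vadd x ` A) - {vzero}) = mult_set K (A - {vzero}) + (\<Sum>a\<in>A. K (vadd x a))"
proof -
  have fA: "finite A" using lin_finite[OF A] .
  have xv: "x \<in> vecs N" using x(1) lin_sub[OF B] by blast
  show "A \<subseteq> A \<union> vadd x ` A" by blast
  show "A \<union> vadd x ` A \<subseteq> B" using AB x(1) lin_add[OF B] by blast
  show "lin_subspace N (A \<union> vadd x ` A)"
    unfolding lin_subspace_def
  proof (intro conjI ballI)
    show "A \<union> vadd x ` A \<subseteq> vecs N" using lin_sub[OF A] xv vecs_add by blast
    show "vzero \<in> A \<union> vadd x ` A" using lin_zero[OF A] by blast
    fix u v assume u: "u \<in> A \<union> vadd x ` A" and v: "v \<in> A \<union> vadd x ` A"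
    show "vadd u v \<in> A \<union> vadd x ` A"
    proof (cases "u \<in> A")
      case True
      show ?thesis
      proof (cases "v \<in> A")
        case True
        then show ?thesis using \<open>u \<in> A\<close> lin_add[OF A] by blast
      next
        case False
        then obtain b where b: "b \<in> A" "v = vadd x b" using v by blast
        have "vadd u v = vadd x (vadd u b)" using b by (simp add: vadd_left_comm)
        then show ?thesis using lin_add[OF A \<open>u \<in> A\<close> b(1)] by blast
      qed
    next
      case False
      then obtain a where a: "a \<in> A" "u = vadd x a" using u by blast
      show ?thesis
      proof (cases "v \<in> A")
        case True
        have "vadd u v = vadd x (vadd a v)" using a by (simp add: vadd_assoc)
        then show ?thesis using lin_add[OF A a(1) True] by blast
      next
        case False
        then obtain b where b: "b \<in> A" "v = vadd x b" using v by blast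
        have "vadd u v = vadd a b" using a b
          by (metis vadd_assoc vadd_cancel_left vadd_left_comm)
        then show ?thesis using lin_add[OF A a(1) b(1)] by simp
      qed
    qed
  qed
  have inj: "inj_on (vadd x) A" by (auto intro: inj_onI)
  have disj: "A \<inter> vadd x ` A = {}"
  proof (rule ccontr)
    assume "A \<inter> vadd x ` A \<noteq> {}"
    then obtain a b where "a \<in> A" "b \<in> A" "a = vadd x b" by blast
    then have "x = vadd a b" by (simp add: vadd_eq_iff vadd_comm)
    then show False using lin_add[OF A \<open>a \<in> A\<close> \<open>b \<in> A\<close>] x(2) by simp
  qed
  have cimg: "card (vadd x ` A) = card A" using card_image[OF inj] .
  show "card (A \<union> vadd x ` A) = 2 * card A"
    using card_Un_disjoint[OF fA finite_imageI[OF fA] disj] cimg by simp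
  have z: "vzero \<notin> vadd x ` A"
  proof
    assume "vzero \<in> vadd x ` A"
    then obtain a where "a \<in> A" "vzero = vadd x a" by blast
    then have "x = a" by (metis vadd_eq_zero)
    then show False using \<open>a \<in> A\<close> x(2) by simp
  qed
  have eq: "(A \<union> vadd x ` A) - {vzero} = (A - {vzero}) \<union> vadd x ` A" using z by blast
  have "mult_set K ((A - {vzero}) \<union> vadd x ` A) = mult_set K (A - {vzero}) + sum K (vadd x ` A)"
    unfolding mult_set_def
    by (rule sum.union_disjoint) (use fA disj in auto)
  also have "sum K (vadd x ` A) = (\<Sum>a\<in>A. K (vadd x a))"
    using sum.reindex[OF inj, of K] by simp
  finally show "mult_set K ((A \<union> vadd x ` A) - {vzero}) = mult_set K (A - {vzero}) + (\<Sum>a\<in>A. K (vadd x a))"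
    unfolding eq .
qed

lemma avg:
  assumes A: "lin_subspace N A" and B: "lin_subspace N B" and AB: "A \<subseteq> B"
    and bound: "\<And>C. lin_subspace N C \<Longrightarrow> A \<subseteq> C \<Longrightarrow> C \<subseteq> B \<Longrightarrow> card C = 2 * card A
                 \<Longrightarrow> mult_set K (C - {vzero}) \<le> M"
  shows "card A * mult_set K (B - A) + card (B - A) * mult_set K (A - {vzero}) \<le> card (B - A) * M"
proof -
  have fA: "finite A" using lin_finite[OF A] .
  have fB: "finite B" using lin_finite[OF B] .
  have fBA: "finite (B - A)" using fB by simp
  have each: "(\<Sum>a\<in>A. K (vadd x a)) + mult_set K (A - {vzero}) \<le> M" if x: "x \<in> B - A" for x
  proof -
    have "x \<in> B" "x \<notin> A" using x by auto
    note T = translate_lin[OF A B AB this]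
    have "mult_set K ((A \<union> vadd x ` A) - {vzero}) \<le> M"
      by (rule bound) (use T in auto)
    then show ?thesis using T(5) by simp
  qed
  have reidx: "(\<Sum>x\<in>B - A. K (vadd x a)) = mult_set K (B - A)" if a: "a \<in> A" for a
  proof -
    have "bij_betw (\<lambda>x. vadd x a) (B - A) (B - A)"
    proof (rule bij_betw_byWitness[where f'="\<lambda>x. vadd x a"])
      show "(\<lambda>x. vadd x a) ` (B - A) \<subseteq> B - A"
      proof
        fix y assume "y \<in> (\<lambda>x. vadd x a) ` (B - A)"
        then obtain x where xx: "x \<in> B" "x \<notin> A" "y = vadd x a" by blast
        have "y \<in> B" using xx lin_add[OF B] a AB by blast
        moreover have "y \<notin> A"
        proof
          assume "y \<in> A"
          then have "vadd y a \<in> A" using lin_add[OF A] a by blast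
          then show False using xx by simp
        qed
        ultimately show "y \<in> B - A" by blast
      qed
      then show "(\<lambda>x. vadd x a) ` (B - A) \<subseteq> B - A" .
    qed simp_all
    then show ?thesis unfolding mult_set_def by (rule sum.reindex_bij_betw)
  qed
  have "card A * mult_set K (B - A) = (\<Sum>a\<in>A. mult_set K (B - A))" by simp
  also have "\<dots> = (\<Sum>a\<in>A. \<Sum>x\<in>B - A. K (vadd x a))" using reidx by simp
  also have "\<dots> = (\<Sum>x\<in>B - A. \<Sum>a\<in>A. K (vadd x a))" by (rule sum.swap)
  finally have eq1: "card A * mult_set K (B - A) = (\<Sum>x\<in>B - A. \<Sum>a\<in>A. K (vadd x a))" .
  have "(\<Sum>x\<in>B - A. (\<Sum>a\<in>A. K (vadd x a)) + mult_set K (A - {vzero})) \<le> (\<Sum>x\<in>B - A. M)"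
    by (rule sum_mono) (use each in auto)
  then show ?thesis using eq1 by (simp add: sum.distrib)
qed

lemma obtain_max:
  fixes f :: "'a \<Rightarrow> nat"
  assumes "finite S" "S \<noteq> {}"
  shows "\<exists>x\<in>S. \<forall>y\<in>S. f y \<le> f x"
proof -
  have "Max (f ` S) \<in> f ` S" using assms by simp
  then obtain x where x: "x \<in> S" "f x = Max (f ` S)" by auto
  have "\<forall>y\<in>S. f y \<le> f x" using x assms by simp
  then show ?thesis using x by blast
qed

lemma nonzero_ex: "v \<noteq> vzero \<Longrightarrow> \<exists>i. v i"
  unfolding vzero_def by auto

lemma sub_half:
  assumes U: "lin_subspace N U" and c: "card U = 2 * m" and m: "m > 0"
  shows "\<exists>C. lin_subspace N C \<and> C \<subseteq> U \<and> card C = m"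
proof -
  have "U \<noteq> {vzero}" using c m by auto
  moreover have "vzero \<in> U" using lin_zero[OF U] .
  ultimately obtain u where u: "u \<in> U" "u \<noteq> vzero" by blast
  then obtain i where i: "u i" using nonzero_ex by blast
  have "card {v\<in>U. \<not> v i} = m"
    using half[OF U u(1) i] card_split[OF lin_finite[OF U], of i] c by simp
  then show ?thesis using ker_lin[OF U, of i] by blast
qed

lemma plane_in: "lin_subspace 4 C \<Longrightarrow> card C = 8 \<Longrightarrow> C - {vzero} \<in> pg_subspaces 4 2"
  unfolding pg_subspaces_def by auto

lemma lin_vecs_sub: "M \<le> N \<Longrightarrow> lin_subspace N (vecs M)"
  unfolding lin_subspace_def vecs_def vadd_def vzero_def by auto

lemma mult_split:
  assumes "finite A" "B \<subseteq> A"
  shows "mult_set K A = mult_set K (A - B) + mult_set K B"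
  unfolding mult_set_def using assms
  by (metis add.commute sum.subset_diff)

lemma lin_pair: "P \<in> vecs N \<Longrightarrow> lin_subspace N {vzero, P}"
  unfolding lin_subspace_def by auto

lemma ub_chain:
  assumes valid: "\<forall>S\<in>pg_subspaces 4 2. mult_set K S \<le> w"
  shows "\<exists>W L p X Y. W \<le> w \<and> 4*X + 28*L \<le> 28*W \<and> mult_set K (pg_points 4) = X + L
           \<and> 2*Y + 6*p \<le> 6*L \<and> W = Y + p \<and> L \<le> 3*p"
proof -
  define f where "f U = mult_set K (U - {vzero})" for U
  define planes where "planes = {U. lin_subspace 4 U \<and> card U = 8}"
  have fplanes: "finite planes"
  proof (rule finite_subset[of _ "Pow (vecs 4)"])
    show "planes \<subseteq> Pow (vecs 4)" unfolding planes_def using lin_sub by blast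
  qed simp
  have "vecs 2 \<in> planes" unfolding planes_def using lin_vecs_sub[of 2 4] card_vecs[of 2] by simp
  then have "planes \<noteq> {}" by blast
  then obtain Up where Up: "Up \<in> planes" and Wmax: "\<forall>C\<in>planes. f C \<le> f Up"
    using obtain_max[OF fplanes] by blast
  define W where "W = f Up"
  have UpL: "lin_subspace 4 Up" and Upc: "card Up = 8" using Up unfolding planes_def by auto
  have Ww: "W \<le> w" using valid plane_in[OF UpL Upc] unfolding W_def f_def by blast
  define lines where "lines = {C. lin_subspace 4 C \<and> C \<subseteq> Up \<and> card C = 4}"
  have flines: "finite lines"
  proof (rule finite_subset[of _ "Pow Up"])
    show "lines \<subseteq> Pow Up" unfolding lines_def by blast
  qed (use lin_finite[OF UpL] in simp)
  have "lines \<noteq> {}" using sub_half[OF UpL, of 4] Upc unfolding lines_def by auto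
  then obtain Ul where Ul: "Ul \<in> lines" and Lmax: "\<forall>C\<in>lines. f C \<le> f Ul"
    using obtain_max[OF flines] by blast
  define L where "L = f Ul"
  have UlL: "lin_subspace 4 Ul" and Ulc: "card Ul = 4" and UlUp: "Ul \<subseteq> Up"
    using Ul unfolding lines_def by auto
  have fUl: "finite Ul" using lin_finite[OF UlL] .
  have z: "vzero \<in> Ul" using lin_zero[OF UlL] .
  have "Ul - {vzero} \<noteq> {}"
  proof
    assume "Ul - {vzero} = {}"
    then have "Ul \<subseteq> {vzero}" by blast
    then have "card Ul \<le> 1" using card_mono[of "{vzero}" Ul] by simp
    with Ulc show False by simp
  qed
  then obtain P where P: "P \<in> Ul - {vzero}" and pmax: "\<forall>Q\<in>Ul - {vzero}. K Q \<le> K P"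
    using obtain_max[of "Ul - {vzero}" K] fUl by blast
  define p where "p = K P"
  have Pv: "P \<in> vecs 4" using P lin_sub[OF UlL] by blast
  have a: "card Ul * mult_set K (vecs 4 - Ul) + card (vecs 4 - Ul) * mult_set K (Ul - {vzero}) \<le> card (vecs 4 - Ul) * W"
  proof (rule avg[OF UlL lin_vecs lin_sub[OF UlL]])
    fix C assume C: "lin_subspace 4 C" "Ul \<subseteq> C" "C \<subseteq> vecs 4" "card C = 2 * card Ul"
    then have "C \<in> planes" unfolding planes_def using Ulc by simp
    then show "mult_set K (C - {vzero}) \<le> W" using Wmax unfolding W_def f_def by blast
  qed
  have c28: "card (vecs 4 - Ul) = 28"
    using card_Diff_subset[OF fUl lin_sub[OF UlL]] card_vecs[of 4] Ulc by simp
  define X where "X = mult_set K (vecs 4 - Ul)"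
  have a': "4*X + 28*L \<le> 28*W" using a c28 Ulc unfolding X_def L_def f_def by simp
  have n: "mult_set K (pg_points 4) = X + L"
  proof -
    have "mult_set K (vecs 4 - {vzero}) = mult_set K ((vecs 4 - {vzero}) - (Ul - {vzero})) + mult_set K (Ul - {vzero})"
      by (rule mult_split) (use lin_sub[OF UlL] in auto)
    moreover have "(vecs 4 - {vzero}) - (Ul - {vzero}) = vecs 4 - Ul" using z by blast
    ultimately show ?thesis unfolding pg_points_def X_def L_def f_def by simp
  qed
  have PUp: "P \<in> Up" using P UlUp by blast
  have Pnz: "P \<noteq> vzero" using P by blast
  have pairL: "lin_subspace 4 {vzero, P}" using lin_pair[OF Pv] .
  have pairc: "card {vzero, P} = 2" using Pnz by simp
  have pairsub: "{vzero, P} \<subseteq> Up" using PUp lin_zero[OF UpL] by blast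
  have b: "card {vzero, P} * mult_set K (Up - {vzero, P}) + card (Up - {vzero, P}) * mult_set K ({vzero, P} - {vzero}) \<le> card (Up - {vzero, P}) * L"
  proof (rule avg[OF pairL UpL pairsub])
    fix C assume C: "lin_subspace 4 C" "{vzero, P} \<subseteq> C" "C \<subseteq> Up" "card C = 2 * card {vzero, P}"
    then have "C \<in> lines" unfolding lines_def using pairc by simp
    then show "mult_set K (C - {vzero}) \<le> L" using Lmax unfolding L_def f_def by blast
  qed
  have c6: "card (Up - {vzero, P}) = 6"
    using card_Diff_subset[OF _ pairsub] Upc pairc by simp
  have pP: "{vzero, P} - {vzero} = {P}" using Pnz by blast
  define Y where "Y = mult_set K (Up - {vzero, P})"
  have b': "2*Y + 6*p \<le> 6*L" using b c6 pairc pP unfolding Y_def p_def mult_set_def by simp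
  have WY: "W = Y + p"
  proof -
    have "mult_set K (Up - {vzero}) = mult_set K ((Up - {vzero}) - {P}) + mult_set K {P}"
      by (rule mult_split) (use lin_finite[OF UpL] PUp Pnz in auto)
    moreover have "(Up - {vzero}) - {P} = Up - {vzero, P}" by blast
    ultimately show ?thesis unfolding W_def f_def Y_def p_def mult_set_def by simp
  qed
  have zL: "lin_subspace 4 {vzero}" unfolding lin_subspace_def by simp
  have c: "card {vzero} * mult_set K (Ul - {vzero}) + card (Ul - {vzero}) * mult_set K ({vzero} - {vzero}) \<le> card (Ul - {vzero}) * p"
  proof (rule avg[OF zL UlL])
    show "{vzero} \<subseteq> Ul" using z by blast
    fix C assume C: "lin_subspace 4 C" "{vzero} \<subseteq> C" "C \<subseteq> Ul" "card C = 2 * card {vzero}"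
    have "card (C - {vzero}) = 1" using C by simp
    then obtain x where x: "C - {vzero} = {x}" by (meson card_1_singletonE)
    then have "x \<in> Ul - {vzero}" using C by blast
    then show "mult_set K (C - {vzero}) \<le> p" using pmax x unfolding p_def mult_set_def by simp
  qed
  have c3: "card (Ul - {vzero}) = 3" using Ulc z fUl by simp
  have c': "L \<le> 3*p" using c c3 unfolding L_def f_def mult_set_def by simp
  show ?thesis using Ww a' n b' WY c' by blast
qed

lemma core:
  fixes n L W p t c :: nat
  assumes h3: "L \<le> 3*p"
  obtains k where "L = 3*k" "k \<le> p"
  | k where "L = 3*k+1" "k+1 \<le> p"
  | k where "L = 3*k+2" "k+1 \<le> p"
proof -
  define k where "k = L div 3"
  have Lk: "L = 3*k + L mod 3" unfolding k_def by simp
  have "L mod 3 < 3" by simp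
  then consider "L mod 3 = 0" | "L mod 3 = 1" | "L mod 3 = 2" by linarith
  then show ?thesis
  proof cases
    case 1
    then have "L = 3*k" using Lk by simp
    moreover have "k \<le> p" using h3 calculation by simp
    ultimately show ?thesis using that(1) by blast
  next
    case 2
    then have "L = 3*k+1" using Lk by simp
    moreover have "3*k < 3*p" using h3 calculation by simp
    then have "k+1 \<le> p" by simp
    ultimately show ?thesis using that(2) by blast
  next
    case 3
    then have "L = 3*k+2" using Lk by simp
    moreover have "3*k < 3*p" using h3 calculation by simp
    then have "k+1 \<le> p" by simp
    ultimately show ?thesis using that(3) by blast
  qed
qed

lemma arith_c4: fixes n L W p t :: nat
  assumes h1: "n + 6*L \<le> 7*W" and h2: "W + 2*p \<le> 3*L" and h3: "L \<le> 3*p" and hw: "W \<le> 7*t+4"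
  shows "n \<le> 31*t+16"
proof (rule core[OF h3])
  fix k assume "L = 3*k" "k \<le> p"
  moreover have "k \<le> t \<or> k = t+1 \<or> t+2 \<le> k" by arith
  ultimately show ?thesis using h1 h2 hw by (elim disjE) linarith+
next
  fix k assume "L = 3*k+1" "k+1 \<le> p"
  moreover have "k \<le> t \<or> k = t+1 \<or> t+2 \<le> k" by arith
  ultimately show ?thesis using h1 h2 hw by (elim disjE) linarith+
next
  fix k assume "L = 3*k+2" "k+1 \<le> p"
  moreover have "k \<le> t \<or> k = t+1 \<or> t+2 \<le> k" by arith
  ultimately show ?thesis using h1 h2 hw by (elim disjE) linarith+
qed

lemma arith_c5: fixes n L W p t :: nat
  assumes h1: "n + 6*L \<le> 7*W" and h2: "W + 2*p \<le> 3*L" and h3: "L \<le> 3*p" and hw: "W \<le> 7*t+5"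
  shows "n \<le> 31*t+17"
proof (rule core[OF h3])
  fix k assume "L = 3*k" "k \<le> p"
  moreover have "k \<le> t \<or> k = t+1 \<or> t+2 \<le> k" by arith
  ultimately show ?thesis using h1 h2 hw by (elim disjE) linarith+
next
  fix k assume "L = 3*k+1" "k+1 \<le> p"
  moreover have "k \<le> t \<or> k = t+1 \<or> t+2 \<le> k" by arith
  ultimately show ?thesis using h1 h2 hw by (elim disjE) linarith+
next
  fix k assume "L = 3*k+2" "k+1 \<le> p"
  moreover have "k \<le> t \<or> k = t+1 \<or> t+2 \<le> k" by arith
  ultimately show ?thesis using h1 h2 hw by (elim disjE) linarith+
qed

lemma arith_c6: fixes n L W p t :: nat
  assumes h1: "n + 6*L \<le> 7*W" and h2: "W + 2*p \<le> 3*L" and h3: "L \<le> 3*p" and hw: "W \<le> 7*t+6"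
  shows "n \<le> 31*t+24"
proof (rule core[OF h3])
  fix k assume "L = 3*k" "k \<le> p"
  moreover have "k \<le> t \<or> k = t+1 \<or> t+2 \<le> k" by arith
  ultimately show ?thesis using h1 h2 hw by (elim disjE) linarith+
next
  fix k assume "L = 3*k+1" "k+1 \<le> p"
  moreover have "k \<le> t \<or> k = t+1 \<or> t+2 \<le> k" by arith
  ultimately show ?thesis using h1 h2 hw by (elim disjE) linarith+
next
  fix k assume "L = 3*k+2" "k+1 \<le> p"
  moreover have "k \<le> t \<or> k = t+1 \<or> t+2 \<le> k" by arith
  ultimately show ?thesis using h1 h2 hw by (elim disjE) linarith+
qed

lemma arith_c7: fixes n L W p t :: nat
  assumes h1: "n + 6*L \<le> 7*W" and h2: "W + 2*p \<le> 3*L" and h3: "L \<le> 3*p" and hw: "W \<le> 7*t+7"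
  shows "n \<le> 31*t+31"
proof (rule core[OF h3])
  fix k assume "L = 3*k" "k \<le> p"
  moreover have "k \<le> t \<or> k = t+1 \<or> t+2 \<le> k" by arith
  ultimately show ?thesis using h1 h2 hw by (elim disjE) linarith+
next
  fix k assume "L = 3*k+1" "k+1 \<le> p"
  moreover have "k \<le> t \<or> k = t+1 \<or> t+2 \<le> k" by arith
  ultimately show ?thesis using h1 h2 hw by (elim disjE) linarith+
next
  fix k assume "L = 3*k+2" "k+1 \<le> p"
  moreover have "k \<le> t \<or> k = t+1 \<or> t+2 \<le> k" by arith
  ultimately show ?thesis using h1 h2 hw by (elim disjE) linarith+
qed

lemma arith_c8: fixes n L W p t :: nat
  assumes h1: "n + 6*L \<le> 7*W" and h2: "W + 2*p \<le> 3*L" and h3: "L \<le> 3*p" and hw: "W \<le> 7*t+8"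
  shows "n \<le> 31*t+32"
proof (rule core[OF h3])
  fix k assume "L = 3*k" "k \<le> p"
  moreover have "k \<le> t \<or> k = t+1 \<or> t+2 \<le> k" by arith
  ultimately show ?thesis using h1 h2 hw by (elim disjE) linarith+
next
  fix k assume "L = 3*k+1" "k+1 \<le> p"
  moreover have "k \<le> t \<or> k = t+1 \<or> t+2 \<le> k" by arith
  ultimately show ?thesis using h1 h2 hw by (elim disjE) linarith+
next
  fix k assume "L = 3*k+2" "k+1 \<le> p"
  moreover have "k \<le> t \<or> k = t+1 \<or> t+2 \<le> k" by arith
  ultimately show ?thesis using h1 h2 hw by (elim disjE) linarith+
qed

lemma arith_c9: fixes n L W p t :: nat
  assumes h1: "n + 6*L \<le> 7*W" and h2: "W + 2*p \<le> 3*L" and h3: "L \<le> 3*p" and hw: "W \<le> 7*t+9"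
  shows "n \<le> 31*t+33"
proof (rule core[OF h3])
  fix k assume "L = 3*k" "k \<le> p"
  moreover have "k \<le> t \<or> k = t+1 \<or> t+2 \<le> k" by arith
  ultimately show ?thesis using h1 h2 hw by (elim disjE) linarith+
next
  fix k assume "L = 3*k+1" "k+1 \<le> p"
  moreover have "k \<le> t \<or> k = t+1 \<or> t+2 \<le> k" by arith
  ultimately show ?thesis using h1 h2 hw by (elim disjE) linarith+
next
  fix k assume "L = 3*k+2" "k+1 \<le> p"
  moreover have "k \<le> t \<or> k = t+1 \<or> t+2 \<le> k" by arith
  ultimately show ?thesis using h1 h2 hw by (elim disjE) linarith+
qed

lemma arith_c10: fixes n L W p t :: nat
  assumes h1: "n + 6*L \<le> 7*W" and h2: "W + 2*p \<le> 3*L" and h3: "L \<le> 3*p" and hw: "W \<le> 7*t+10"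
  shows "n \<le> 31*t+40"
proof (rule core[OF h3])
  fix k assume "L = 3*k" "k \<le> p"
  moreover have "k \<le> t \<or> k = t+1 \<or> t+2 \<le> k" by arith
  ultimately show ?thesis using h1 h2 hw by (elim disjE) linarith+
next
  fix k assume "L = 3*k+1" "k+1 \<le> p"
  moreover have "k \<le> t \<or> k = t+1 \<or> t+2 \<le> k" by arith
  ultimately show ?thesis using h1 h2 hw by (elim disjE) linarith+
next
  fix k assume "L = 3*k+2" "k+1 \<le> p"
  moreover have "k \<le> t \<or> k = t+1 \<or> t+2 \<le> k" by arith
  ultimately show ?thesis using h1 h2 hw by (elim disjE) linarith+
qed

definition h0 :: "vec2 \<Rightarrow> nat" where "h0 v = (if v 0 then 1 else 0)"
definition c01 :: "vec2 \<Rightarrow> nat" where "c01 v = (if v 0 \<or> v 1 then 1 else 0)"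
definition ept :: vec2 where "ept = (\<lambda>i. i = 0)"
definition e1 :: "vec2 \<Rightarrow> nat" where "e1 v = (if v = ept then 1 else 0)"

lemma sum_ind: "finite S \<Longrightarrow> (\<Sum>v\<in>S. (if P v then 1 else 0::nat)) = card {v\<in>S. P v}"
  using sum.inter_filter[of S "\<lambda>_. 1::nat" P] by simp

lemma card_split_P: "finite U \<Longrightarrow> card U = card {v\<in>U. P v} + card {v\<in>U. \<not> P v}"
proof -
  assume f: "finite U"
  have "U = {v\<in>U. P v} \<union> {v\<in>U. \<not> P v}" by auto
  then have "card U = card ({v\<in>U. P v} \<union> {v\<in>U. \<not> P v})" by simp
  also have "\<dots> = card {v\<in>U. P v} + card {v\<in>U. \<not> P v}"
    by (rule card_Un_disjoint) (use f in auto)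
  finally show ?thesis .
qed

lemma plane_card7: "lin_subspace N U \<Longrightarrow> card U = 8 \<Longrightarrow> card (U - {vzero}) = 7"
  using lin_zero[of N U] lin_finite[of N U] by simp

lemma h0_plane: assumes U: "lin_subspace N U" "card U = 8" shows "mult_set h0 (U - {vzero}) \<le> 4"
proof -
  have f: "finite (U - {vzero})" using lin_finite[OF U(1)] by simp
  have "mult_set h0 (U - {vzero}) = card {v\<in>U - {vzero}. v 0}"
    unfolding mult_set_def h0_def using sum_ind[OF f] by simp
  moreover have "{v\<in>U - {vzero}. v 0} = {v\<in>U. v 0}" by auto
  ultimately show ?thesis using coord_small[OF U(1), of 0] U(2) by simp
qed

lemma c01_plane: assumes U: "lin_subspace N U" "card U = 8" shows "mult_set c01 (U - {vzero}) \<le> 6"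
proof -
  have fU: "finite U" using lin_finite[OF U(1)] .
  have f: "finite (U - {vzero})" using fU by simp
  have "mult_set c01 (U - {vzero}) = card {v\<in>U - {vzero}. v 0 \<or> v 1}"
    unfolding mult_set_def c01_def using sum_ind[OF f] by simp
  moreover have "{v\<in>U - {vzero}. v 0 \<or> v 1} = {v\<in>U. v 0 \<or> v 1}" by auto
  ultimately have eq: "mult_set c01 (U - {vzero}) = card {v\<in>U. v 0 \<or> v 1}" by (simp only:)
  define U0 where "U0 = {v\<in>U. \<not> v 0}"
  have U0L: "lin_subspace N U0" unfolding U0_def using ker_lin[OF U(1)] .
  have "card U \<le> 2 * card U0" unfolding U0_def using ker_big[OF U(1)] .
  moreover have "card U0 \<le> 2 * card {v\<in>U0. \<not> v 1}" using ker_big[OF U0L] .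
  moreover have "{v\<in>U0. \<not> v 1} = {v\<in>U. \<not> (v 0 \<or> v 1)}" unfolding U0_def by auto
  ultimately have "2 \<le> card {v\<in>U. \<not> (v 0 \<or> v 1)}" using U(2) by simp
  moreover have "card U = card {v\<in>U. v 0 \<or> v 1} + card {v\<in>U. \<not> (v 0 \<or> v 1)}"
    using card_split_P[OF fU] .
  ultimately show ?thesis using eq U(2) by simp
qed

lemma e1_le: "finite S \<Longrightarrow> mult_set e1 S \<le> 1"
proof -
  assume f: "finite S"
  have "mult_set e1 S = card {v\<in>S. v = ept}" unfolding mult_set_def e1_def using sum_ind[OF f] by simp
  also have "\<dots> \<le> card {ept}" by (rule card_mono) auto
  finally show ?thesis by simp
qed

lemma ept_pt: "ept \<in> pg_points 4"
  unfolding pg_points_def vecs_def ept_def vzero_def by (auto simp: fun_eq_iff)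

lemma e1_total: "mult_set e1 (pg_points 4) = 1"
proof -
  have f: "finite (pg_points 4)" unfolding pg_points_def by simp
  have "mult_set e1 (pg_points 4) = card {v\<in>pg_points 4. v = ept}" unfolding mult_set_def e1_def using sum_ind[OF f] by simp
  moreover have "{v\<in>pg_points 4. v = ept} = {ept}" using ept_pt by auto
  ultimately show ?thesis by simp
qed

lemma card_pts: "card (pg_points 4) = 31"
  unfolding pg_points_def using card_vecs[of 4] by simp

lemma h0_total: "mult_set h0 (pg_points 4) = 16"
proof -
  have f: "finite (pg_points 4)" unfolding pg_points_def by simp
  have "mult_set h0 (pg_points 4) = card {v\<in>pg_points 4. v 0}" unfolding mult_set_def h0_def using sum_ind[OF f] by simp
  moreover have "{v\<in>pg_points 4. v 0} = {v\<in>vecs 4. v 0}" unfolding pg_points_def by auto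
  ultimately have eq: "mult_set h0 (pg_points 4) = card {v\<in>vecs 4. v 0}" by (simp only:)
  have "ept \<in> vecs 4" "ept 0" using ept_pt unfolding pg_points_def ept_def by auto
  from half[OF lin_vecs this] card_split[OF finite_vecs[of 4], of 0] card_vecs[of 4]
  show ?thesis using eq by simp
qed

lemma c01_total: "mult_set c01 (pg_points 4) = 24"
proof -
  have f: "finite (pg_points 4)" unfolding pg_points_def by simp
  have "mult_set c01 (pg_points 4) = card {v\<in>pg_points 4. v 0 \<or> v 1}" unfolding mult_set_def c01_def using sum_ind[OF f] by simp
  moreover have "{v\<in>pg_points 4. v 0 \<or> v 1} = {v\<in>vecs 4. v 0 \<or> v 1}" unfolding pg_points_def by auto
  ultimately have eq: "mult_set c01 (pg_points 4) = card {v\<in>vecs 4. v 0 \<or> v 1}" by (simp only:)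
  define U0 where "U0 = {v\<in>vecs 4. \<not> v 0}"
  have U0L: "lin_subspace 4 U0" unfolding U0_def using ker_lin[OF lin_vecs] .
  have "ept \<in> vecs 4" "ept 0" using ept_pt unfolding pg_points_def ept_def by auto
  from half[OF lin_vecs this] card_split[OF finite_vecs[of 4], of 0] card_vecs[of 4]
  have c0: "card U0 = 16" unfolding U0_def by simp
  define e' :: vec2 where "e' = (\<lambda>i. i = 1)"
  have "e' \<in> U0" "e' 1" unfolding U0_def e'_def vecs_def by auto
  from half[OF U0L this] card_split[OF lin_finite[OF U0L], of 1] c0
  have "card {v\<in>U0. \<not> v 1} = 8" by simp
  moreover have "{v\<in>U0. \<not> v 1} = {v\<in>vecs 4. \<not> (v 0 \<or> v 1)}" unfolding U0_def by auto
  moreover have "card (vecs 4) = card {v\<in>vecs 4. v 0 \<or> v 1} + card {v\<in>vecs 4. \<not> (v 0 \<or> v 1)}"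
    using card_split_P[OF finite_vecs] .
  ultimately show ?thesis using eq card_vecs[of 4] by simp
qed

definition Kc :: "nat \<Rightarrow> nat \<Rightarrow> nat \<Rightarrow> nat \<Rightarrow> vec2 \<Rightarrow> nat" where
  "Kc a b c d v = a + b * h0 v + c * c01 v + d * e1 v"

lemma mult_Kc: "mult_set (Kc a b c d) S = a * card S + b * mult_set h0 S + c * mult_set c01 S + d * mult_set e1 S"
  unfolding mult_set_def Kc_def by (simp add: sum.distrib sum_distrib_left)

lemma Kc_valid: "\<forall>S\<in>pg_subspaces 4 2. mult_set (Kc a b c d) S \<le> 7*a + 4*b + 6*c + d"
proof
  fix S assume "S \<in> pg_subspaces 4 2"
  then obtain U where U: "lin_subspace 4 U" "card U = 8" "S = U - {vzero}" unfolding pg_subspaces_def by auto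
  have "mult_set h0 S \<le> 4" using h0_plane[OF U(1,2)] U(3) by simp
  moreover have "mult_set c01 S \<le> 6" using c01_plane[OF U(1,2)] U(3) by simp
  moreover have "mult_set e1 S \<le> 1" using e1_le lin_finite[OF U(1)] U(3) by simp
  moreover have "card S = 7" using plane_card7[OF U(1,2)] U(3) by simp
  ultimately have "a * card S \<le> a * 7" "b * mult_set h0 S \<le> b * 4" "c * mult_set c01 S \<le> c * 6"
    "d * mult_set e1 S \<le> d * 1" by (simp_all add: mult_le_mono2)
  then show "mult_set (Kc a b c d) S \<le> 7*a + 4*b + 6*c + d" unfolding mult_Kc by linarith
qed

lemma Kc_total: "mult_set (Kc a b c d) (pg_points 4) = 31*a + 16*b + 24*c + d"
  unfolding mult_Kc card_pts h0_total c01_total e1_total by simp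

lemma m2_eqI:
  assumes ub: "\<And>K. \<forall>S\<in>pg_subspaces 4 2. mult_set K S \<le> w \<Longrightarrow> mult_set K (pg_points 4) \<le> n"
    and lb: "\<forall>S\<in>pg_subspaces 4 2. mult_set K0 S \<le> w" "mult_set K0 (pg_points 4) = n"
  shows "m2 2 4 w = n"
  unfolding m2_def
proof (rule Max_eqI)
  let ?A = "{mult_set K (pg_points 4) |K. \<forall>S\<in>pg_subspaces 4 2. mult_set K S \<le> w}"
  show "finite ?A" by (rule finite_subset[of _ "{..n}"]) (auto dest: ub)
  show "\<And>y. y \<in> ?A \<Longrightarrow> y \<le> n" by (auto dest: ub)
  show "n \<in> ?A" using lb by blast
qed

lemma ub_gen:
  assumes valid: "\<forall>S\<in>pg_subspaces 4 2. mult_set K S \<le> w"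
  obtains n W L p where "n = mult_set K (pg_points 4)" "n + 6*L \<le> 7*W" "W + 2*p \<le> 3*L" "L \<le> 3*p" "W \<le> w"
proof -
  from ub_chain[OF valid] obtain W L p X Y where h: "W \<le> w" "4*X + 28*L \<le> 28*W" "mult_set K (pg_points 4) = X + L"
    "2*Y + 6*p \<le> 6*L" "W = Y + p" "L \<le> 3*p" by blast
  have "mult_set K (pg_points 4) + 6*L \<le> 7*W" using h by linarith
  moreover have "W + 2*p \<le> 3*L" using h by linarith
  ultimately show ?thesis using that h by blast
qed

definition vsum :: "vec2 set \<Rightarrow> vec2" where
  "vsum X = (\<lambda>i. odd (card {x\<in>X. x i}))"

lemma vsum_empty[simp]: "vsum {} = vzero"
  unfolding vsum_def vzero_def by simp

lemma vsum_insert: assumes "finite X" "x \<notin> X" shows "vsum (insert x X) = vadd x (vsum X)"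
proof (rule ext)
  fix i
  have "{y\<in>insert x X. y i} = (if x i then insert x {y\<in>X. y i} else {y\<in>X. y i})" by auto
  then show "vsum (insert x X) i = vadd x (vsum X) i"
    unfolding vsum_def vadd_def using assms by auto
qed

lemma card_symdiff:
  assumes "finite A" "finite B"
  shows "card ((A - B) \<union> (B - A)) + 2 * card (A \<inter> B) = card A + card B"
proof -
  have "card ((A - B) \<union> (B - A)) = card (A - B) + card (B - A)"
    by (rule card_Un_disjoint) (use assms in auto)
  moreover have "card A = card (A - B) + card (A \<inter> B)"
  proof -
    have "A = (A - B) \<union> (A \<inter> B)" by blast
    then have "card A = card ((A - B) \<union> (A \<inter> B))" by simp
    also have "\<dots> = card (A - B) + card (A \<inter> B)" by (rule card_Un_disjoint) (use assms in auto)
    finally show ?thesis .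
  qed
  moreover have "card B = card (B - A) + card (A \<inter> B)"
  proof -
    have "B = (B - A) \<union> (A \<inter> B)" by blast
    then have "card B = card ((B - A) \<union> (A \<inter> B))" by simp
    also have "\<dots> = card (B - A) + card (A \<inter> B)" by (rule card_Un_disjoint) (use assms in auto)
    finally show ?thesis .
  qed
  ultimately show ?thesis by simp
qed

lemma par: "(x::nat) + 2*y = a + b \<Longrightarrow> odd x = (odd a \<noteq> odd b)"
proof -
  assume h: "x + 2*y = a + b"
  have "odd (x + 2*y) = odd (a+b)" using h by simp
  then show ?thesis by simp
qed

lemma vsum_symdiff:
  assumes "finite A" "finite B"
  shows "vsum ((A - B) \<union> (B - A)) = vadd (vsum A) (vsum B)"
proof (rule ext)
  fix i
  let ?A = "{x\<in>A. x i}" and ?B = "{x\<in>B. x i}"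
  have e: "{x\<in>(A - B) \<union> (B - A). x i} = (?A - ?B) \<union> (?B - ?A)" by auto
  have "card ((?A - ?B) \<union> (?B - ?A)) + 2 * card (?A \<inter> ?B) = card ?A + card ?B"
    by (rule card_symdiff) (use assms in auto)
  then have "odd (card ((?A - ?B) \<union> (?B - ?A))) = (odd (card ?A) \<noteq> odd (card ?B))"
    by (rule par)
  then show "vsum ((A - B) \<union> (B - A)) i = vadd (vsum A) (vsum B) i"
    unfolding vsum_def vadd_def e by simp
qed

lemma vsum_vecs: "X \<subseteq> vecs N \<Longrightarrow> vsum X \<in> vecs N"
proof -
  assume X: "X \<subseteq> vecs N"
  have e: "{x\<in>X. x i} = {}" if "N < i" for i using X that unfolding vecs_def by auto
  show ?thesis unfolding vecs_def vsum_def
  proof (intro CollectI allI impI)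
    fix i assume "N < i"
    then show "\<not> odd (card {x\<in>X. x i})" using e[of i] by (simp only:) simp
  qed
qed

lemma vsum_in_lin:
  assumes U: "lin_subspace N U" and f: "finite X" and X: "X \<subseteq> U"
  shows "vsum X \<in> U"
  using f X
proof (induction X rule: finite_induct)
  case empty
  then show ?case using lin_zero[OF U] vsum_empty by metis
next
  case (insert x F)
  then show ?case using vsum_insert[OF insert(1,2)] lin_add[OF U] by simp
qed

lemma vsum_single[simp]: "vsum {x} = x"
  using vsum_insert[of "{}" x] by simp

definition span :: "vec2 set \<Rightarrow> vec2 set" where "span X = vsum ` Pow X"

lemma span_lin:
  assumes f: "finite X" and X: "X \<subseteq> vecs N"
  shows "lin_subspace N (span X)"
  unfolding lin_subspace_def span_def
proof (intro conjI ballI)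
  show "vsum ` Pow X \<subseteq> vecs N" using vsum_vecs X by blast
  show "vzero \<in> vsum ` Pow X" using vsum_empty by (metis Pow_bottom image_eqI)
  fix u v assume "u \<in> vsum ` Pow X" "v \<in> vsum ` Pow X"
  then obtain A B where AB: "A \<subseteq> X" "B \<subseteq> X" "u = vsum A" "v = vsum B" by auto
  have "vadd u v = vsum ((A - B) \<union> (B - A))"
    using vsum_symdiff[of A B] AB f finite_subset by metis
  moreover have "(A - B) \<union> (B - A) \<in> Pow X" using AB by auto
  ultimately show "vadd u v \<in> vsum ` Pow X" by blast
qed

lemma span_contains: "X \<subseteq> span X"
  unfolding span_def by (auto intro!: image_eqI[where x="{_}"])

lemma span_card:
  assumes f: "finite X" and indep: "\<And>T. T \<subseteq> X \<Longrightarrow> T \<noteq> {} \<Longrightarrow> vsum T \<noteq> vzero"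
  shows "card (span X) = 2 ^ card X"
proof -
  have "inj_on vsum (Pow X)"
  proof (rule inj_onI)
    fix A B assume A: "A \<in> Pow X" and B: "B \<in> Pow X" and e: "vsum A = vsum B"
    have fA: "finite A" "finite B" using A B f finite_subset by auto
    have "vsum ((A - B) \<union> (B - A)) = vzero" using vsum_symdiff[OF fA] e by simp
    moreover have "(A - B) \<union> (B - A) \<subseteq> X" using A B by auto
    ultimately have "(A - B) \<union> (B - A) = {}" using indep by blast
    then show "A = B" by blast
  qed
  then show ?thesis unfolding span_def using card_image card_Pow f by metis
qed

lemma n_split:
  assumes C: "lin_subspace 4 C"
  shows "mult_set K (pg_points 4) = mult_set K (vecs 4 - C) + mult_set K (C - {vzero})"
proof -
  have z: "vzero \<in> C" using lin_zero[OF C] .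
  have "mult_set K (vecs 4 - {vzero}) = mult_set K ((vecs 4 - {vzero}) - (C - {vzero})) + mult_set K (C - {vzero})"
    by (rule mult_split) (use lin_sub[OF C] in auto)
  moreover have "(vecs 4 - {vzero}) - (C - {vzero}) = vecs 4 - C" using z by blast
  ultimately show ?thesis unfolding pg_points_def by simp
qed

lemma pigeon3:
  assumes fA: "finite A" and fB: "finite B" and img: "f ` A \<subseteq> B" and c: "2 * card B < card A"
  shows "\<exists>a1\<in>A. \<exists>a2\<in>A. \<exists>a3\<in>A. a1 \<noteq> a2 \<and> a1 \<noteq> a3 \<and> a2 \<noteq> a3 \<and> f a1 = f a2 \<and> f a1 = f a3"
proof (rule ccontr)
  assume neg: "\<not> ?thesis"
  have small: "card {a\<in>A. f a = b} \<le> 2" for b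
  proof (rule ccontr)
    assume "\<not> card {a\<in>A. f a = b} \<le> 2"
    then have "3 \<le> card {a\<in>A. f a = b}" by simp
    from obtain_subset_with_card_n[OF this] obtain T where T: "T \<subseteq> {a\<in>A. f a = b}" "card T = 3" .
    then obtain x y z where xyz: "T = {x,y,z}" "x \<noteq> y" "y \<noteq> z" "x \<noteq> z" by (auto simp: card_3_iff)
    then have ex: "x \<in> A" "y \<in> A" "z \<in> A" "f x = b" "f y = b" "f z = b" using T(1) by auto
    have "\<exists>a1\<in>A. \<exists>a2\<in>A. \<exists>a3\<in>A. a1 \<noteq> a2 \<and> a1 \<noteq> a3 \<and> a2 \<noteq> a3 \<and> f a1 = f a2 \<and> f a1 = f a3"
    proof (intro bexI conjI)
      show "x \<noteq> y" "x \<noteq> z" "y \<noteq> z" using xyz by auto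
      show "f x = f y" "f x = f z" using ex by auto
    qed (use ex in auto)
    with neg show False by contradiction
  qed
  have "A \<subseteq> (\<Union>b\<in>B. {a\<in>A. f a = b})" using img by blast
  moreover have "finite (\<Union>b\<in>B. {a\<in>A. f a = b})" by (rule finite_subset[OF _ fA]) auto
  ultimately have "card A \<le> card (\<Union>b\<in>B. {a\<in>A. f a = b})"
    using card_mono by blast
  also have "\<dots> \<le> (\<Sum>b\<in>B. card {a\<in>A. f a = b})" by (rule card_UN_le[OF fB])
  also have "\<dots> \<le> (\<Sum>b\<in>B. 2)" by (rule sum_mono) (use small in auto)
  finally show False using c by simp
qed

lemma ub3:
  assumes valid: "\<forall>S\<in>pg_subspaces 4 2. mult_set K S \<le> 3"
  shows "mult_set K (pg_points 4) \<le> 6"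
proof (rule ccontr)
  assume "\<not> ?thesis"
  then have n7: "7 \<le> mult_set K (pg_points 4)" by simp
  have fpts: "finite (pg_points 4)" unfolding pg_points_def by simp
  have line2: "mult_set K (C - {vzero}) \<le> 2" if C: "lin_subspace 4 C" "card C = 4" for C
  proof -
    have "card C * mult_set K (vecs 4 - C) + card (vecs 4 - C) * mult_set K (C - {vzero}) \<le> card (vecs 4 - C) * 3"
    proof (rule avg[OF C(1) lin_vecs lin_sub[OF C(1)]])
      fix C' assume "lin_subspace 4 C'" "C \<subseteq> C'" "C' \<subseteq> vecs 4" "card C' = 2 * card C"
      then show "mult_set K (C' - {vzero}) \<le> 3" using valid plane_in C(2) by simp
    qed
    moreover have "card (vecs 4 - C) = 28"
      using card_Diff_subset[OF lin_finite[OF C(1)] lin_sub[OF C(1)]] card_vecs[of 4] C(2) by simp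
    ultimately show ?thesis using n_split[OF C(1), of K] n7 C(2) by simp
  qed
  have pt1: "K P \<le> 1" if P: "P \<in> pg_points 4" for P
  proof -
    have Pv: "P \<in> vecs 4" and Pz: "P \<noteq> vzero" using P unfolding pg_points_def by auto
    have pairL: "lin_subspace 4 {vzero, P}" using lin_pair[OF Pv] .
    have pc: "card {vzero, P} = 2" using Pz by simp
    have "card {vzero, P} * mult_set K (vecs 4 - {vzero, P}) + card (vecs 4 - {vzero, P}) * mult_set K ({vzero, P} - {vzero}) \<le> card (vecs 4 - {vzero, P}) * 2"
    proof (rule avg[OF pairL lin_vecs lin_sub[OF pairL]])
      fix C' assume "lin_subspace 4 C'" "{vzero, P} \<subseteq> C'" "C' \<subseteq> vecs 4" "card C' = 2 * card {vzero, P}"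
      then show "mult_set K (C' - {vzero}) \<le> 2" using line2 pc by simp
    qed
    moreover have "card (vecs 4 - {vzero, P}) = 30"
      using card_Diff_subset[OF _ lin_sub[OF pairL]] card_vecs[of 4] pc by simp
    moreover have "{vzero, P} - {vzero} = {P}" using Pz by blast
    ultimately have "2 * mult_set K (vecs 4 - {vzero, P}) + 30 * K P \<le> 60" using pc unfolding mult_set_def by simp
    moreover have "mult_set K (pg_points 4) = mult_set K (vecs 4 - {vzero, P}) + K P"
      using n_split[OF pairL, of K] \<open>{vzero, P} - {vzero} = {P}\<close> unfolding mult_set_def by simp
    ultimately show ?thesis using n7 by linarith
  qed
  define S where "S = {P\<in>pg_points 4. K P \<noteq> 0}"
  have Spts: "S \<subseteq> pg_points 4" unfolding S_def by blast
  have fS: "finite S" using Spts fpts finite_subset by blast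
  have K1: "K P = 1" if "P \<in> S" for P using pt1[of P] that unfolding S_def by fastforce
  have cardle: "card D \<le> mult_set K T" if D: "D \<subseteq> S" "D \<subseteq> T" "finite T" for D T
  proof -
    have fD: "finite D" using D fS finite_subset by blast
    have "card D = mult_set K D" unfolding mult_set_def using K1 D(1) by (simp add: subset_iff)
    also have "\<dots> \<le> mult_set K T" unfolding mult_set_def by (rule sum_mono2) (use D in auto)
    finally show ?thesis .
  qed
  have cS: "mult_set K (pg_points 4) = card S"
  proof -
    have "mult_set K (pg_points 4) = mult_set K (pg_points 4 - S) + mult_set K S"
      by (rule mult_split[OF fpts Spts])
    moreover have "mult_set K (pg_points 4 - S) = 0" unfolding mult_set_def S_def using fpts by simp
    moreover have "mult_set K S = card S" unfolding mult_set_def using K1 by simp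
    ultimately show ?thesis by simp
  qed
  define nodep where "nodep m \<longleftrightarrow> (\<forall>T. T \<subseteq> S \<longrightarrow> T \<noteq> {} \<longrightarrow> card T \<le> m \<longrightarrow> vsum T \<noteq> vzero)" for m
  have nd0: "nodep 0" unfolding nodep_def using fS finite_subset by fastforce
  have step: "nodep (Suc m)" if nd: "nodep m" and m3: "m \<le> 3" for m
    unfolding nodep_def
  proof (intro allI impI)
    fix T assume T: "T \<subseteq> S" "T \<noteq> {}" "card T \<le> Suc m"
    show "vsum T \<noteq> vzero"
    proof
      assume v0: "vsum T = vzero"
      have fT: "finite T" using T(1) fS finite_subset by blast
      have cT: "card T = Suc m"
      proof (rule ccontr)
        assume "card T \<noteq> Suc m"
        then have "card T \<le> m" using T(3) by simp
        then show False using nd T(1,2) v0 unfolding nodep_def by blast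
      qed
      obtain z where z: "z \<in> T" using T(2) by blast
      define X where "X = T - {z}"
      have fX: "finite X" using fT unfolding X_def by simp
      have TX: "T = insert z X" "z \<notin> X" using z unfolding X_def by auto
      have cX: "card X = m" using cT fT z unfolding X_def by simp
      have "vadd z (vsum X) = vzero" using v0 vsum_insert[OF fX TX(2)] TX(1) by simp
      then have vX: "vsum X = z" by simp
      have Xv: "X \<subseteq> vecs 4" using T(1) Spts unfolding X_def pg_points_def by blast
      have spL: "lin_subspace 4 (span X)" using span_lin[OF fX Xv] .
      have spc: "card (span X) = 2 ^ m"
      proof -
        have "card (span X) = 2 ^ card X"
        proof (rule span_card[OF fX])
          fix T' assume "T' \<subseteq> X" "T' \<noteq> {}"
          moreover have "card T' \<le> m" using card_mono[OF fX \<open>T' \<subseteq> X\<close>] cX by simp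
          moreover have "T' \<subseteq> S" using \<open>T' \<subseteq> X\<close> T(1) unfolding X_def by blast
          ultimately show "vsum T' \<noteq> vzero" using nd unfolding nodep_def by blast
        qed
        then show ?thesis using cX by simp
      qed
      have Tsp: "T \<subseteq> span X - {vzero}"
      proof -
        have "X \<subseteq> span X" by (rule span_contains)
        moreover have "z \<in> span X" unfolding span_def using vX by blast
        moreover have "vzero \<notin> T" using T(1) Spts unfolding pg_points_def by blast
        ultimately show ?thesis using TX(1) by blast
      qed
      have fsp: "finite (span X - {vzero})" using lin_finite[OF spL] by simp
      have le: "Suc m \<le> mult_set K (span X - {vzero})" using cardle[OF T(1) Tsp fsp] cT by simp
      have cnt: "Suc m \<le> card (span X - {vzero})" using card_mono[OF fsp Tsp] cT by simp
      have z0: "vzero \<in> span X" using lin_zero[OF spL] .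
      have csp: "card (span X - {vzero}) = 2 ^ m - 1" using spc z0 lin_finite[OF spL] by simp
      have "m = 0 \<or> m = 1 \<or> m = 2 \<or> m = 3" using m3 by arith
      then show False
      proof (elim disjE)
        assume "m = 0" then show False using cnt csp by simp
      next
        assume "m = 1" then show False using cnt csp by simp
      next
        assume m2: "m = 2"
        then have "mult_set K (span X - {vzero}) \<le> 2" using line2[OF spL] spc by simp
        then show False using le m2 by simp
      next
        assume m3': "m = 3"
        then have "mult_set K (span X - {vzero}) \<le> 3" using valid plane_in[OF spL] spc by simp
        then show False using le m3' by simp
      qed
    qed
  qed
  have nd4: "nodep 4" using step[OF step[OF step[OF step[OF nd0]]]] by (simp add: numeral_eq_Suc)
  have "7 \<le> card S" using n7 cS by simp
  from obtain_subset_with_card_n[OF this] obtain S7 where S7: "S7 \<subseteq> S" "card S7 = 7" "finite S7" .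
  have "vsum ` Pow S7 \<subseteq> vecs 4" using S7(1) Spts vsum_vecs unfolding pg_points_def by blast
  moreover have "2 * card (vecs 4) < card (Pow S7)" using card_vecs[of 4] S7 by (simp add: card_Pow)
  ultimately have "\<exists>a1\<in>Pow S7. \<exists>a2\<in>Pow S7. \<exists>a3\<in>Pow S7. a1 \<noteq> a2 \<and> a1 \<noteq> a3 \<and> a2 \<noteq> a3 \<and> vsum a1 = vsum a2 \<and> vsum a1 = vsum a3"
    by (intro pigeon3) (use S7(3) in simp_all)
  then obtain T1 T2 T3 where TT: "T1 \<in> Pow S7" "T2 \<in> Pow S7" "T3 \<in> Pow S7" "T1 \<noteq> T2" "T1 \<noteq> T3" "T2 \<noteq> T3"
     "vsum T1 = vsum T2" "vsum T1 = vsum T3" by blast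
  define D1 where "D1 = (T1 - T2) \<union> (T2 - T1)"
  define D2 where "D2 = (T1 - T3) \<union> (T3 - T1)"
  define D3 where "D3 = (D1 - D2) \<union> (D2 - D1)"
  have fin: "finite T1" "finite T2" "finite T3" using TT(1-3) S7(3) by (meson PowD finite_subset)+
  have fD: "finite D1" "finite D2" unfolding D1_def D2_def using fin by auto
  have v1: "vsum D1 = vzero" unfolding D1_def using vsum_symdiff[OF fin(1,2)] TT by simp
  have v2: "vsum D2 = vzero" unfolding D2_def using vsum_symdiff[OF fin(1,3)] TT by simp
  have v3: "vsum D3 = vzero" unfolding D3_def using vsum_symdiff[OF fD] v1 v2 by simp
  have ne: "D1 \<noteq> {}" "D2 \<noteq> {}" "D3 \<noteq> {}"
    unfolding D1_def D2_def D3_def using TT(4,5,6) by blast+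
  have sub: "D1 \<subseteq> S7" "D2 \<subseteq> S7" "D3 \<subseteq> S7" unfolding D1_def D2_def D3_def using TT by blast+
  have big: "5 \<le> card D" if "D \<subseteq> S7" "D \<noteq> {}" "vsum D = vzero" for D
  proof (rule ccontr)
    assume "\<not> 5 \<le> card D"
    then have "card D \<le> 4" by simp
    then show False using nd4 that S7(1) unfolding nodep_def by blast
  qed
  have "card D3 + 2 * card (D1 \<inter> D2) = card D1 + card D2" unfolding D3_def by (rule card_symdiff[OF fD])
  moreover have "card D1 + card D2 = card (D1 \<union> D2) + card (D1 \<inter> D2)" by (rule card_Un_Int[OF fD])
  moreover have "card (D1 \<union> D2) \<le> 7" using card_mono[OF S7(3), of "D1 \<union> D2"] sub S7(2) by simp
  ultimately have "card D1 + card D2 + card D3 \<le> 14" by linarith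
  moreover have "5 \<le> card D1" "5 \<le> card D2" "5 \<le> card D3" using big sub ne v1 v2 v3 by auto
  ultimately show False by linarith
qed

definition unitv :: "nat \<Rightarrow> vec2" where "unitv i = (\<lambda>k. k = i)"
definition jv :: vec2 where "jv = (\<lambda>k. k \<le> 4)"
definition S6 :: "vec2 set" where "S6 = insert jv (unitv ` {0..4})"
definition K3 :: "vec2 \<Rightarrow> nat" where "K3 v = (if v \<in> S6 then 1 else 0)"

lemma S6_pts: "S6 \<subseteq> pg_points 4"
  unfolding S6_def pg_points_def vecs_def unitv_def jv_def vzero_def by (auto simp: fun_eq_iff)

lemma unitv_inj: "inj unitv"
proof (rule injI)
  fix x y assume "unitv x = unitv y"
  then have "unitv x x = unitv y x" by simp
  then show "x = y" unfolding unitv_def by simp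
qed

lemma jv_notin: "jv \<notin> unitv ` {0..4}"
proof
  assume "jv \<in> unitv ` {0..4}"
  then obtain i where i: "i \<le> 4" "jv = unitv i" by auto
  define k where "k = (if i = 0 then 1 else (0::nat))"
  have "jv k" unfolding jv_def k_def by simp
  moreover have "\<not> unitv i k" unfolding unitv_def k_def by simp
  ultimately show False using i(2) by simp
qed

lemma card_S6: "card S6 = 6"
proof -
  have "card (unitv ` {0..4}) = 5" using card_image[OF inj_on_subset[OF unitv_inj]] by simp
  then show ?thesis unfolding S6_def using jv_notin by simp
qed

lemma S6_dep:
  assumes T: "T \<subseteq> S6" "vsum T = vzero" "T \<noteq> {}"
  shows "T = S6"
proof -
  have fT: "finite T" using T(1) finite_subset unfolding S6_def by blast
  have eqv: "unitv i \<in> T \<longleftrightarrow> jv \<in> T" if i: "i \<le> 4" for i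
  proof -
    have ne: "unitv i \<noteq> jv"
    proof
      assume "unitv i = jv"
      then have "jv \<in> unitv ` {0..4}" using i by (metis atLeastAtMost_iff image_eqI zero_le)
      then show False using jv_notin by blast
    qed
    have filt: "{x\<in>T. x i} = T \<inter> {unitv i, jv}"
    proof
      show "{x\<in>T. x i} \<subseteq> T \<inter> {unitv i, jv}"
      proof
        fix x assume x: "x \<in> {x\<in>T. x i}"
        then have "x \<in> S6" using T(1) by blast
        then show "x \<in> T \<inter> {unitv i, jv}" using x unfolding S6_def unitv_def by auto
      qed
      show "T \<inter> {unitv i, jv} \<subseteq> {x\<in>T. x i}" using i unfolding unitv_def jv_def by auto
    qed
    have "\<not> vsum T i" using T(2) by simp
    then have ev: "even (card (T \<inter> {unitv i, jv}))" unfolding vsum_def filt by simp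
    show ?thesis
    proof (rule ccontr)
      assume "\<not> (unitv i \<in> T \<longleftrightarrow> jv \<in> T)"
      then have "T \<inter> {unitv i, jv} = {unitv i} \<or> T \<inter> {unitv i, jv} = {jv}" using ne by blast
      then show False using ev by auto
    qed
  qed
  obtain x where x: "x \<in> T" using T(3) by blast
  have "jv \<in> T"
  proof (cases "x = jv")
    case True then show ?thesis using x by simp
  next
    case False
    then obtain i where "i \<in> {0..4}" "x = unitv i" using x T(1) unfolding S6_def by blast
    then show ?thesis using eqv x by auto
  qed
  then have "unitv ` {0..4} \<subseteq> T" using eqv by auto
  then have "S6 \<subseteq> T" unfolding S6_def using \<open>jv \<in> T\<close> by blast
  then show ?thesis using T(1) by blast
qed

lemma mult_K3: "finite T \<Longrightarrow> mult_set K3 T = card (T \<inter> S6)"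
proof -
  assume f: "finite T"
  have "mult_set K3 T = card {v\<in>T. v \<in> S6}" unfolding mult_set_def K3_def using sum_ind[OF f] by simp
  moreover have "{v\<in>T. v \<in> S6} = T \<inter> S6" by blast
  ultimately show ?thesis by simp
qed

lemma K3_valid: "\<forall>S\<in>pg_subspaces 4 2. mult_set K3 S \<le> 3"
proof
  fix S assume "S \<in> pg_subspaces 4 2"
  then obtain U where U: "lin_subspace 4 U" "card U = 8" "S = U - {vzero}" unfolding pg_subspaces_def by auto
  have fU: "finite U" using lin_finite[OF U(1)] .
  have fS: "finite S" using fU U(3) by simp
  show "mult_set K3 S \<le> 3"
  proof (rule ccontr)
    assume "\<not> mult_set K3 S \<le> 3"
    then have "4 \<le> card (S \<inter> S6)" using mult_K3[OF fS] by simp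
    from obtain_subset_with_card_n[OF this] obtain X where X: "X \<subseteq> S \<inter> S6" "card X = 4" "finite X" .
    have XU: "X \<subseteq> U" using X(1) U(3) by blast
    have "span X \<subseteq> U" unfolding span_def
    proof
      fix y assume "y \<in> vsum ` Pow X"
      then obtain T where "T \<subseteq> X" "y = vsum T" by auto
      then show "y \<in> U" using vsum_in_lin[OF U(1), of T] XU X(3) finite_subset by blast
    qed
    then have "card (span X) \<le> 8" using card_mono[OF fU] U(2) by metis
    moreover have "card (span X) = 2 ^ card X"
    proof (rule span_card[OF X(3)])
      fix T assume T: "T \<subseteq> X" "T \<noteq> {}"
      show "vsum T \<noteq> vzero"
      proof
        assume "vsum T = vzero"
        then have "T = S6" using S6_dep T X(1) by blast
        then have "card S6 \<le> card X" using card_mono[OF X(3) T(1)] by simp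
        then show False using card_S6 X(2) by simp
      qed
    qed
    ultimately show False using X(2) by simp
  qed
qed

lemma K3_total: "mult_set K3 (pg_points 4) = 6"
proof -
  have f: "finite (pg_points 4)" unfolding pg_points_def by simp
  have "pg_points 4 \<inter> S6 = S6" using S6_pts by blast
  then show ?thesis using mult_K3[OF f] card_S6 by simp
qed

lemma Kc_valid': "7*a + 4*b + 6*c + d = w \<Longrightarrow> \<forall>S\<in>pg_subspaces 4 2. mult_set (Kc a b c d) S \<le> w"
  using Kc_valid by blast

theorem mainTheorem5:
  fixes t :: nat
  shows "m2 2 4 (7*t + 4) = 31*t + 16 \<and>
         m2 2 4 (7*t + 5) = 31*t + 17 \<and>
         m2 2 4 (7*t + 6) = 31*t + 24 \<and>
         m2 2 4 (7*t + 7) = 31*t + 31 \<and>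
         m2 2 4 (7*t + 8) = 31*t + 32 \<and>
         m2 2 4 (7*t + 9) = 31*t + 33 \<and>
         m2 2 4 (7*t + 10) = 31*t + 40 \<and>
         m2 2 4 3 = 6"
proof (intro conjI)
  show "m2 2 4 (7*t + 4) = 31*t + 16"
  proof (rule m2_eqI)
    fix K assume "\<forall>S\<in>pg_subspaces 4 2. mult_set K S \<le> 7*t + 4"
    then show "mult_set K (pg_points 4) \<le> 31*t + 16" by (rule ub_gen) (metis arith_c4)
  next
    show "\<forall>S\<in>pg_subspaces 4 2. mult_set (Kc t 1 0 0) S \<le> 7*t + 4" by (rule Kc_valid') simp
    show "mult_set (Kc t 1 0 0) (pg_points 4) = 31*t + 16" by (simp add: Kc_total)
  qed
  show "m2 2 4 (7*t + 5) = 31*t + 17"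
  proof (rule m2_eqI)
    fix K assume "\<forall>S\<in>pg_subspaces 4 2. mult_set K S \<le> 7*t + 5"
    then show "mult_set K (pg_points 4) \<le> 31*t + 17" by (rule ub_gen) (metis arith_c5)
  next
    show "\<forall>S\<in>pg_subspaces 4 2. mult_set (Kc t 1 0 1) S \<le> 7*t + 5" by (rule Kc_valid') simp
    show "mult_set (Kc t 1 0 1) (pg_points 4) = 31*t + 17" by (simp add: Kc_total)
  qed
  show "m2 2 4 (7*t + 6) = 31*t + 24"
  proof (rule m2_eqI)
    fix K assume "\<forall>S\<in>pg_subspaces 4 2. mult_set K S \<le> 7*t + 6"
    then show "mult_set K (pg_points 4) \<le> 31*t + 24" by (rule ub_gen) (metis arith_c6)
  next
    show "\<forall>S\<in>pg_subspaces 4 2. mult_set (Kc t 0 1 0) S \<le> 7*t + 6" by (rule Kc_valid') simp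
    show "mult_set (Kc t 0 1 0) (pg_points 4) = 31*t + 24" by (simp add: Kc_total)
  qed
  show "m2 2 4 (7*t + 7) = 31*t + 31"
  proof (rule m2_eqI)
    fix K assume "\<forall>S\<in>pg_subspaces 4 2. mult_set K S \<le> 7*t + 7"
    then show "mult_set K (pg_points 4) \<le> 31*t + 31" by (rule ub_gen) (metis arith_c7)
  next
    show "\<forall>S\<in>pg_subspaces 4 2. mult_set (Kc (t+1) 0 0 0) S \<le> 7*t + 7" by (rule Kc_valid') simp
    show "mult_set (Kc (t+1) 0 0 0) (pg_points 4) = 31*t + 31" by (simp add: Kc_total)
  qed
  show "m2 2 4 (7*t + 8) = 31*t + 32"
  proof (rule m2_eqI)
    fix K assume "\<forall>S\<in>pg_subspaces 4 2. mult_set K S \<le> 7*t + 8"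
    then show "mult_set K (pg_points 4) \<le> 31*t + 32" by (rule ub_gen) (metis arith_c8)
  next
    show "\<forall>S\<in>pg_subspaces 4 2. mult_set (Kc (t+1) 0 0 1) S \<le> 7*t + 8" by (rule Kc_valid') simp
    show "mult_set (Kc (t+1) 0 0 1) (pg_points 4) = 31*t + 32" by (simp add: Kc_total)
  qed
  show "m2 2 4 (7*t + 9) = 31*t + 33"
  proof (rule m2_eqI)
    fix K assume "\<forall>S\<in>pg_subspaces 4 2. mult_set K S \<le> 7*t + 9"
    then show "mult_set K (pg_points 4) \<le> 31*t + 33" by (rule ub_gen) (metis arith_c9)
  next
    show "\<forall>S\<in>pg_subspaces 4 2. mult_set (Kc (t+1) 0 0 2) S \<le> 7*t + 9" by (rule Kc_valid') simp
    show "mult_set (Kc (t+1) 0 0 2) (pg_points 4) = 31*t + 33" by (simp add: Kc_total)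
  qed
  show "m2 2 4 (7*t + 10) = 31*t + 40"
  proof (rule m2_eqI)
    fix K assume "\<forall>S\<in>pg_subspaces 4 2. mult_set K S \<le> 7*t + 10"
    then show "mult_set K (pg_points 4) \<le> 31*t + 40" by (rule ub_gen) (metis arith_c10)
  next
    show "\<forall>S\<in>pg_subspaces 4 2. mult_set (Kc t 1 1 0) S \<le> 7*t + 10" by (rule Kc_valid') simp
    show "mult_set (Kc t 1 1 0) (pg_points 4) = 31*t + 40" by (simp add: Kc_total)
  qed
  show "m2 2 4 3 = 6"
    by (rule m2_eqI[OF ub3 K3_valid K3_total])
qed

end
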